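(* Let $G=(V,E)$ be a control flow graph and $p$ a predicate node. The graph $A_p$ has at most one nontrivial strongly connected component, and if such a component exists, it is terminal.
   Context: A control flow graph (CFG) is a finite directed graph $G=(V,E)$ in which every node has at most two outgoing edges; nodes with exactly two outgoing edges are predicate nodes. A path from $n_1$ is a nonempty finite or infinite sequence of nodes with each adjacent pair an edge; it is maximal if it is infinite or its last node has no successor. $V_p$ is the set of nodes occurring on all maximal paths from $p$ in $G$. For $V'\subseteq V$, a $V'$-interval from $x$ to $y$ is a finite path $n_1\ldots n_k$ in $G$ with $k\ge 2$, $n_1=x\in V'$, $n_k=y\in V'$, and $n_i\notin V'$ for $1<i<k$. $A_p$ is the directed graph with node set $V_p$ and an edge $(x,y)$ iff there is a $V_p$-interval from $x$ to $y$ in $G$. A strongly connected component (SCC) is trivial if the subgraph it induces has no edge, and nontrivial otherwise; it is terminal if no edge leads from it to a node outside it. *)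

theory Defs
  imports Main
begin

definition succs :: "('a \<times> 'a) set \<Rightarrow> 'a \<Rightarrow> 'a set" where
  "succs E x = {y. (x, y) \<in> E}"

definition cfg :: "'a set \<Rightarrow> ('a \<times> 'a) set \<Rightarrow> bool" where
  "cfg V E \<longleftrightarrow> finite V \<and> E \<subseteq> V \<times> V \<and> (\<forall>x\<in>V. card (succs E x) \<le> 2)"

definition predicate_node :: "'a set \<Rightarrow> ('a \<times> 'a) set \<Rightarrow> 'a \<Rightarrow> bool" where
  "predicate_node V E p \<longleftrightarrow> p \<in> V \<and> card (succs E p) = 2"

definition fpath :: "'a set \<Rightarrow> ('a \<times> 'a) set \<Rightarrow> 'a list \<Rightarrow> bool" where
  "fpath V E xs \<longleftrightarrow> xs \<noteq> [] \<and> set xs \<subseteq> V \<and>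
     (\<forall>i. Suc i < length xs \<longrightarrow> (xs ! i, xs ! Suc i) \<in> E)"

definition ipath :: "'a set \<Rightarrow> ('a \<times> 'a) set \<Rightarrow> (nat \<Rightarrow> 'a) \<Rightarrow> bool" where
  "ipath V E f \<longleftrightarrow> (\<forall>i. f i \<in> V \<and> (f i, f (Suc i)) \<in> E)"

text \<open>Maximal paths from p: infinite paths from p, and finite paths from p ending in a node
  without successor. V_p: nodes occurring on all of them.\<close>
definition Vp :: "'a set \<Rightarrow> ('a \<times> 'a) set \<Rightarrow> 'a \<Rightarrow> 'a set" where
  "Vp V E p = {v \<in> V.
     (\<forall>xs. fpath V E xs \<and> hd xs = p \<and> succs E (last xs) = {} \<longrightarrow> v \<in> set xs) \<and>
     (\<forall>f. ipath V E f \<and> f 0 = p \<longrightarrow> v \<in> range f)}"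

definition interval :: "'a set \<Rightarrow> ('a \<times> 'a) set \<Rightarrow> 'a set \<Rightarrow> 'a \<Rightarrow> 'a \<Rightarrow> 'a list \<Rightarrow> bool" where
  "interval V E V' x y xs \<longleftrightarrow> fpath V E xs \<and> length xs \<ge> 2 \<and>
     hd xs = x \<and> x \<in> V' \<and> last xs = y \<and> y \<in> V' \<and>
     (\<forall>i. 0 < i \<and> i < length xs - 1 \<longrightarrow> xs ! i \<notin> V')"

definition Ap_edges :: "'a set \<Rightarrow> ('a \<times> 'a) set \<Rightarrow> 'a \<Rightarrow> ('a \<times> 'a) set" where
  "Ap_edges V E p = {(x, y). x \<in> Vp V E p \<and> y \<in> Vp V E p \<and>
     (\<exists>xs. interval V E (Vp V E p) x y xs)}"

definition is_scc :: "'a set \<Rightarrow> ('a \<times> 'a) set \<Rightarrow> 'a set \<Rightarrow> bool" where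
  "is_scc N R C \<longleftrightarrow> (\<exists>x\<in>N. C = {y \<in> N. (x, y) \<in> R\<^sup>* \<and> (y, x) \<in> R\<^sup>*})"

definition nontrivial_scc :: "('a \<times> 'a) set \<Rightarrow> 'a set \<Rightarrow> bool" where
  "nontrivial_scc R C \<longleftrightarrow> (\<exists>x\<in>C. \<exists>y\<in>C. (x, y) \<in> R)"

definition terminal_scc :: "('a \<times> 'a) set \<Rightarrow> 'a set \<Rightarrow> bool" where
  "terminal_scc R C \<longleftrightarrow> (\<forall>x\<in>C. \<forall>y. (x, y) \<in> R \<longrightarrow> y \<in> C)"

end

theory Submission
  imports Defs
begin

lemma fpath_take:
  assumes "fpath V E xs" "0 < m"
  shows "fpath V E (take m xs)"
  using assms unfolding fpath_def
  by (auto dest: in_set_takeD)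

lemma fpath_drop:
  assumes "fpath V E xs" "m < length xs"
  shows "fpath V E (drop m xs)"
  using assms unfolding fpath_def
  by (auto dest: in_set_dropD)

lemma fpath_Cons:
  assumes "a \<in> V" "fpath V E xs" "(a, hd xs) \<in> E"
  shows "fpath V E (a # xs)"
  using assms unfolding fpath_def
  apply (auto simp: nth_Cons split: nat.splits)
  by (metis hd_conv_nth)

lemma rtrancl_fpath:
  assumes "(a, b) \<in> E\<^sup>*" "a \<in> V" "E \<subseteq> V \<times> V"
  shows "\<exists>xs. fpath V E xs \<and> hd xs = a \<and> last xs = b"
  using assms
proof (induction rule: converse_rtrancl_induct)
  case base
  then show ?case by (intro exI[of _ "[b]"]) (auto simp: fpath_def)
next
  case (step y z)
  then have "z \<in> V" by auto
  with step obtain xs where "fpath V E xs" "hd xs = z" "last xs = b" by auto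
  then show ?case using step
  proof (intro exI[of _ "y # xs"] conjI)
    show "fpath V E (y # xs)" using step \<open>fpath V E xs\<close> \<open>hd xs = z\<close> by (intro fpath_Cons) auto
  qed (use \<open>fpath V E xs\<close> \<open>last xs = b\<close> in \<open>auto simp: fpath_def\<close>)
qed

lemma fpath_nth_rtrancl:
  assumes "fpath V E xs" "i < length xs"
  shows "(hd xs, xs ! i) \<in> E\<^sup>*"
  using assms
proof (induction i)
  case 0
  then show ?case by (simp add: hd_conv_nth)
next
  case (Suc i)
  then have "(xs ! i, xs ! Suc i) \<in> E" by (auto simp: fpath_def)
  with Suc show ?case by (meson Suc_lessD rtrancl.rtrancl_into_rtrancl)
qed

lemma fpath_set_rtrancl:
  assumes "fpath V E xs" "v \<in> set xs"
  shows "(hd xs, v) \<in> E\<^sup>*"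
  using assms by (metis fpath_nth_rtrancl in_set_conv_nth)

lemma fpath_trancl:
  assumes "fpath V E xs" "length xs \<ge> 2"
  shows "(hd xs, last xs) \<in> E\<^sup>+"
proof -
  have "(hd xs, xs ! (length xs - 2)) \<in> E\<^sup>*" using assms fpath_nth_rtrancl by fastforce
  moreover have "(xs ! (length xs - 2), xs ! Suc (length xs - 2)) \<in> E"
    using assms unfolding fpath_def by auto
  moreover have "Suc (length xs - 2) = length xs - 1" using assms by auto
  moreover have "xs \<noteq> []" using assms by auto
  then have "last xs = xs ! (length xs - 1)" by (simp add: last_conv_nth)
  ultimately show ?thesis by (metis rtrancl_into_trancl1)
qed

lemma Ap_trancl:
  assumes "(x, y) \<in> Ap_edges V E p"
  shows "(x, y) \<in> E\<^sup>+"
proof -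
  obtain xs where "interval V E (Vp V E p) x y xs" using assms unfolding Ap_edges_def by auto
  then have "fpath V E xs" "length xs \<ge> 2" "hd xs = x" "last xs = y" unfolding interval_def by auto
  then show ?thesis using fpath_trancl by metis
qed

lemma ipath_exists:
  assumes "p \<in> S" "S \<subseteq> V" "\<And>z. z \<in> S \<Longrightarrow> \<exists>w\<in>S. (z, w) \<in> E"
  shows "\<exists>f. ipath V E f \<and> f 0 = p \<and> range f \<subseteq> S"
proof -
  define g where "g z = (SOME w. w \<in> S \<and> (z, w) \<in> E)" for z
  have g: "z \<in> S \<Longrightarrow> g z \<in> S \<and> (z, g z) \<in> E" for z
    unfolding g_def using assms(3) by (metis (mono_tags, lifting) someI_ex)
  define f where "f n = (g ^^ n) p" for n
  have fS: "f n \<in> S" for n by (induction n) (auto simp: f_def assms(1) g)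
  have "ipath V E f" unfolding ipath_def using fS g assms(2) by (auto simp: f_def)
  then show ?thesis using fS by (auto simp: f_def)
qed

lemma reach_Vp:
  assumes "E \<subseteq> V \<times> V" "p \<in> V" "x \<in> Vp V E p"
  shows "(p, x) \<in> E\<^sup>*"
proof -
  define T where "T = {z \<in> V. (p, z) \<in> E\<^sup>*}"
  show ?thesis
  proof (cases "\<exists>z\<in>T. succs E z = {}")
    case True
    then obtain z where z: "z \<in> T" "succs E z = {}" by auto
    then obtain xs where xs: "fpath V E xs" "hd xs = p" "last xs = z"
      using rtrancl_fpath[of p z E V] assms unfolding T_def by auto
    then have "x \<in> set xs" using assms(3) z unfolding Vp_def by auto
    then show ?thesis using fpath_set_rtrancl xs by fastforce
  next
    case False
    have "\<exists>w\<in>T. (z, w) \<in> E" if "z \<in> T" for z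
    proof -
      from False that obtain w where "(z, w) \<in> E" unfolding succs_def by auto
      then show ?thesis using that assms(1) unfolding T_def
        by (auto intro: rtrancl_into_rtrancl)
    qed
    moreover have "p \<in> T" "T \<subseteq> V" using assms unfolding T_def by auto
    ultimately obtain f where f: "ipath V E f" "f 0 = p" "range f \<subseteq> T"
      using ipath_exists[of p T V E] by blast
    then have "x \<in> range f" using assms(3) unfolding Vp_def by auto
    then show ?thesis using f T_def by auto
  qed
qed

lemma cycle_all:
  assumes "E \<subseteq> V \<times> V" "(x, x) \<in> E\<^sup>+" "(p, x) \<in> E\<^sup>*" "p \<in> V" "y \<in> Vp V E p"
  shows "(y, x) \<in> E\<^sup>*"
proof -
  define S where "S = {z \<in> V. (z, x) \<in> E\<^sup>*}"
  have "\<exists>w\<in>S. (z, w) \<in> E" if "z \<in> S" for z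
  proof -
    have "(z, x) \<in> E\<^sup>+"
      using that assms(2) unfolding S_def by (metis mem_Collect_eq rtrancl_eq_or_trancl)
    then obtain w where "(z, w) \<in> E" "(w, x) \<in> E\<^sup>*" by (auto dest: tranclD)
    then show ?thesis using assms(1) unfolding S_def by auto
  qed
  moreover have "p \<in> S" "S \<subseteq> V" using assms unfolding S_def by auto
  ultimately obtain f where f: "ipath V E f" "f 0 = p" "range f \<subseteq> S"
    using ipath_exists[of p S V E] by blast
  then have "y \<in> range f" using assms(5) unfolding Vp_def by auto
  then show ?thesis using f S_def by auto
qed

lemma fpath_Ap:
  "fpath V E xs \<Longrightarrow> hd xs \<in> Vp V E p \<Longrightarrow> last xs \<in> Vp V E p \<Longrightarrow>
   (hd xs, last xs) \<in> (Ap_edges V E p)\<^sup>*"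
proof (induction "length xs" arbitrary: xs rule: less_induct)
  case less
  have fp: "fpath V E xs" and h: "hd xs \<in> Vp V E p" and l: "last xs \<in> Vp V E p" using less.prems by auto
  have ne: "xs \<noteq> []" using fp unfolding fpath_def by simp
  show ?case
  proof (cases "length xs \<ge> 2")
    case False
    then have "length xs = 1" using ne by (cases xs) (auto simp: Suc_le_eq)
    then have "hd xs = last xs" by (cases xs) auto
    then show ?thesis by simp
  next
    case True
    define P where "P i = (0 < i \<and> i < length xs \<and> xs ! i \<in> Vp V E p)" for i
    have "last xs = xs ! (length xs - 1)" using ne by (simp add: last_conv_nth)
    then have "P (length xs - 1)" unfolding P_def using True l by simp
    define k where "k = (LEAST i. P i)"
    have Pk: "P k" unfolding k_def by (rule LeastI) fact
    then have k0: "0 < k" "k < length xs" "xs ! k \<in> Vp V E p" unfolding P_def by simp_all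
    have notk: "xs ! j \<notin> Vp V E p" if "0 < j" "j < k" for j
    proof
      assume "xs ! j \<in> Vp V E p"
      then have "P j" unfolding P_def using that k0 by simp
      then have "k \<le> j" unfolding k_def by (rule Least_le)
      then show False using that by simp
    qed
    define ys where "ys = take (Suc k) xs"
    have ly: "length ys = Suc k" unfolding ys_def using k0 by simp
    have "interval V E (Vp V E p) (hd xs) (xs ! k) ys"
      unfolding interval_def
    proof (intro conjI allI impI)
      show "fpath V E ys" unfolding ys_def by (rule fpath_take[OF fp]) simp
      show "2 \<le> length ys" using ly k0 by simp
      show "hd ys = hd xs" unfolding ys_def using ne by simp
      show "last ys = xs ! k" unfolding ys_def using k0
        by (simp add: take_Suc_conv_app_nth)
      show "hd xs \<in> Vp V E p" by (rule h)
      show "xs ! k \<in> Vp V E p" by (rule k0(3))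
      fix i assume i: "0 < i \<and> i < length ys - 1"
      then have "ys ! i = xs ! i" unfolding ys_def using k0 by (simp add: nth_take)
      then show "ys ! i \<notin> Vp V E p" using notk i ly by simp
    qed
    then have e1: "(hd xs, xs ! k) \<in> Ap_edges V E p"
      unfolding Ap_edges_def using h k0(3) by blast
    define zs where "zs = drop k xs"
    have hz: "hd zs = xs ! k" unfolding zs_def using k0 by (simp add: hd_drop_conv_nth)
    have lz: "last zs = last xs" unfolding zs_def using k0 by simp
    have "(hd zs, last zs) \<in> (Ap_edges V E p)\<^sup>*"
    proof (rule less.hyps)
      show "length zs < length xs" unfolding zs_def using k0 by simp
      show "fpath V E zs" unfolding zs_def by (rule fpath_drop[OF fp k0(2)])
      show "hd zs \<in> Vp V E p" using hz k0(3) by simp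
      show "last zs \<in> Vp V E p" using lz l by simp
    qed
    then show ?thesis using e1 hz lz by simp
  qed
qed

lemma E_Ap:
  assumes "E \<subseteq> V \<times> V" "a \<in> Vp V E p" "b \<in> Vp V E p" "(a, b) \<in> E\<^sup>*"
  shows "(a, b) \<in> (Ap_edges V E p)\<^sup>*"
proof -
  have "a \<in> V" using assms unfolding Vp_def by auto
  then obtain xs where "fpath V E xs" "hd xs = a" "last xs = b"
    using rtrancl_fpath[OF assms(4) _ assms(1)] by blast
  then show ?thesis using fpath_Ap[of V E xs p] assms by simp
qed

lemma Ap_E: "(Ap_edges V E p)\<^sup>* \<subseteq> E\<^sup>*"
proof -
  have "(Ap_edges V E p)\<^sup>* \<subseteq> (E\<^sup>+)\<^sup>*" by (rule rtrancl_mono) (use Ap_trancl in auto)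
  then show ?thesis by simp
qed

lemma key:
  assumes E: "E \<subseteq> V \<times> V" and pV: "p \<in> V"
    and C: "is_scc (Vp V E p) (Ap_edges V E p) C" "nontrivial_scc (Ap_edges V E p) C"
    and x: "x \<in> C" and y: "y \<in> Vp V E p"
  shows "(y, x) \<in> (Ap_edges V E p)\<^sup>*"
proof -
  let ?R = "Ap_edges V E p"
  obtain z where z: "z \<in> Vp V E p" "C = {y \<in> Vp V E p. (z, y) \<in> ?R\<^sup>* \<and> (y, z) \<in> ?R\<^sup>*}"
    using C(1) unfolding is_scc_def by blast
  obtain u w where uw: "u \<in> C" "w \<in> C" "(u, w) \<in> ?R" using C(2) unfolding nontrivial_scc_def by blast
  have xz: "x \<in> Vp V E p" "(z, x) \<in> ?R\<^sup>*" "(x, z) \<in> ?R\<^sup>*" using x z(2) by blast+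
  then have xN: "x \<in> Vp V E p" by simp
  have uz: "(z, u) \<in> ?R\<^sup>*" using uw(1) z(2) by blast
  have wz: "(w, z) \<in> ?R\<^sup>*" using uw(2) z(2) by blast
  have "(x, u) \<in> ?R\<^sup>*" using xz(3) uz by (rule rtrancl_trans)
  then have 1: "(x, u) \<in> E\<^sup>*" using Ap_E[of V E p] by (rule subsetD[rotated])
  have "(w, x) \<in> ?R\<^sup>*" using wz xz(2) by (rule rtrancl_trans)
  then have 2: "(w, x) \<in> E\<^sup>*" using Ap_E[of V E p] by (rule subsetD[rotated])
  note 1 2
  moreover have "(u, w) \<in> E\<^sup>+" using Ap_trancl[OF uw(3)] .
  ultimately have "(x, x) \<in> E\<^sup>+" using rtrancl_trancl_trancl[OF 1] trancl_rtrancl_trancl[OF _ 2] by blast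
  moreover have "(p, x) \<in> E\<^sup>*" by (rule reach_Vp[OF E pV xN])
  ultimately have "(y, x) \<in> E\<^sup>*" by (rule cycle_all[OF E _ _ pV y])
  then show ?thesis by (rule E_Ap[OF E y xN])
qed

theorem lemma4p6:
  fixes V :: "'a set" and E :: "('a \<times> 'a) set" and p :: 'a
  assumes "cfg V E" and "predicate_node V E p"
  shows "(\<forall>C1 C2. is_scc (Vp V E p) (Ap_edges V E p) C1 \<and> nontrivial_scc (Ap_edges V E p) C1 \<and>
                  is_scc (Vp V E p) (Ap_edges V E p) C2 \<and> nontrivial_scc (Ap_edges V E p) C2
                  \<longrightarrow> C1 = C2) \<and>
         (\<forall>C. is_scc (Vp V E p) (Ap_edges V E p) C \<and> nontrivial_scc (Ap_edges V E p) C
                  \<longrightarrow> terminal_scc (Ap_edges V E p) C)"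
proof -
  let ?R = "Ap_edges V E p" and ?N = "Vp V E p"
  have E: "E \<subseteq> V \<times> V" using assms(1) unfolding cfg_def by blast
  have pV: "p \<in> V" using assms(2) unfolding predicate_node_def by blast
  have elem: "\<exists>x. x \<in> C" if "nontrivial_scc ?R C" for C
    using that unfolding nontrivial_scc_def by blast
  show ?thesis
  proof (intro conjI allI impI)
    fix C1 C2 assume H: "is_scc ?N ?R C1 \<and> nontrivial_scc ?R C1 \<and> is_scc ?N ?R C2 \<and> nontrivial_scc ?R C2"
    obtain z1 where z1: "z1 \<in> ?N" "C1 = {y \<in> ?N. (z1, y) \<in> ?R\<^sup>* \<and> (y, z1) \<in> ?R\<^sup>*}"
      using H unfolding is_scc_def by blast
    obtain z2 where z2: "z2 \<in> ?N" "C2 = {y \<in> ?N. (z2, y) \<in> ?R\<^sup>* \<and> (y, z2) \<in> ?R\<^sup>*}"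
      using H unfolding is_scc_def by blast
    obtain x1 where x1: "x1 \<in> C1" using elem H by blast
    obtain x2 where x2: "x2 \<in> C2" using elem H by blast
    have x1p: "x1 \<in> ?N" "(z1, x1) \<in> ?R\<^sup>*" "(x1, z1) \<in> ?R\<^sup>*" using x1 z1(2) by blast+
    have x2p: "x2 \<in> ?N" "(z2, x2) \<in> ?R\<^sup>*" "(x2, z2) \<in> ?R\<^sup>*" using x2 z2(2) by blast+
    have a1: "(x1, x2) \<in> ?R\<^sup>*" using key[OF E pV _ _ x2 x1p(1)] H by blast
    have a2: "(x2, x1) \<in> ?R\<^sup>*" using key[OF E pV _ _ x1 x2p(1)] H by blast
    have b1: "(z1, z2) \<in> ?R\<^sup>*"
      using rtrancl_trans[OF rtrancl_trans[OF x1p(2) a1] x2p(3)] .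
    have b2: "(z2, z1) \<in> ?R\<^sup>*"
      using rtrancl_trans[OF rtrancl_trans[OF x2p(2) a2] x1p(3)] .
    show "C1 = C2"
    proof (rule set_eqI)
      fix y
      have "(z1, y) \<in> ?R\<^sup>* \<longleftrightarrow> (z2, y) \<in> ?R\<^sup>*"
        using rtrancl_trans[OF b1] rtrancl_trans[OF b2] by blast
      moreover have "(y, z1) \<in> ?R\<^sup>* \<longleftrightarrow> (y, z2) \<in> ?R\<^sup>*"
        using rtrancl_trans[OF _ b1, of y] rtrancl_trans[OF _ b2, of y] by blast
      ultimately show "y \<in> C1 \<longleftrightarrow> y \<in> C2" unfolding z1(2) z2(2) by blast
    qed
  next
    fix C assume H: "is_scc ?N ?R C \<and> nontrivial_scc ?R C"
    obtain z where z: "z \<in> ?N" "C = {y \<in> ?N. (z, y) \<in> ?R\<^sup>* \<and> (y, z) \<in> ?R\<^sup>*}"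
      using H unfolding is_scc_def by blast
    show "terminal_scc ?R C" unfolding terminal_scc_def
    proof (intro ballI allI impI)
      fix x y assume xy: "x \<in> C" "(x, y) \<in> ?R"
      have yN: "y \<in> ?N" using xy(2) unfolding Ap_edges_def by blast
      have xp: "(z, x) \<in> ?R\<^sup>*" "(x, z) \<in> ?R\<^sup>*" using xy(1) z(2) by blast+
      have "(y, x) \<in> ?R\<^sup>*" using key[OF E pV _ _ xy(1) yN] H by blast
      then have "(y, z) \<in> ?R\<^sup>*" using xp(2) by (rule rtrancl_trans)
      moreover have "(z, y) \<in> ?R\<^sup>*" using xp(1) xy(2) by (rule rtrancl_into_rtrancl)
      ultimately show "y \<in> C" using z(2) yN by blast
    qed
  qed
qed

end
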